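(* Let $P,R\in\mathrm{Sym}(n,\mathbb{R})$ and $Q\in\mathrm{Mat}(n,\mathbb{R})$ with $P$ invertible, and let $B=\begin{bmatrix}P^{-1}&-P^{-1}Q\\-Q^TP^{-1}&Q^TP^{-1}Q-R\end{bmatrix}$, $J=\begin{bmatrix}0&-I_n\\ I_n&0\end{bmatrix}$. Then $JB$ is hyperbolic if and only if $\det\big(a^2P+ia(Q^T-Q)+R\big)\neq0$ for all $a\in\mathbb{R}$.
   Context: A real matrix is hyperbolic if it has no eigenvalue on the imaginary axis. *)

theory Defs
  imports "Jordan_Normal_Form.Jordan_Normal_Form"
begin

definition hyperbolic :: "real mat \<Rightarrow> bool" where
  "hyperbolic A \<longleftrightarrow> (\<forall>k::complex. eigenvalue (map_mat complex_of_real A) k \<longrightarrow> Re k \<noteq> 0)"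

end

theory Submission imports Defs begin

lemma smult_append_vec: "k \<cdot>\<^sub>v (x @\<^sub>v y) = (k \<cdot>\<^sub>v x) @\<^sub>v (k \<cdot>\<^sub>v y)"
  by (rule eq_vecI) (auto simp: nth_append)

lemma key:
  fixes P Q R Pi Qt :: "complex mat" and x y :: "complex vec"
  assumes c: "P \<in> carrier_mat n n" "Q \<in> carrier_mat n n" "R \<in> carrier_mat n n"
    "Pi \<in> carrier_mat n n" "Qt \<in> carrier_mat n n"
    and inv: "P * Pi = 1\<^sub>m n" "Pi * P = 1\<^sub>m n"
    and xy: "x \<in> carrier_vec n" "y \<in> carrier_vec n"
  shows "(four_block_mat (0\<^sub>m n n) (- 1\<^sub>m n) (1\<^sub>m n) (0\<^sub>m n n) *
       four_block_mat Pi (- (Pi * Q)) (- (Qt * Pi)) (Qt * Pi * Q - R)) *\<^sub>v (x @\<^sub>v y) = k \<cdot>\<^sub>v (x @\<^sub>v y)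
    \<longleftrightarrow> x = k \<cdot>\<^sub>v (P *\<^sub>v y) + Q *\<^sub>v y \<and> 
        k^2 \<cdot>\<^sub>v (P *\<^sub>v y) + k \<cdot>\<^sub>v (Q *\<^sub>v y) - k \<cdot>\<^sub>v (Qt *\<^sub>v y) - R *\<^sub>v y = 0\<^sub>v n"
proof -
  define a where "a = Pi *\<^sub>v x"
  define b where "b = Q *\<^sub>v y"
  define cc where "cc = Pi *\<^sub>v b"
  define d where "d = Qt *\<^sub>v a"
  define e where "e = Qt *\<^sub>v cc"
  define r where "r = R *\<^sub>v y"
  define p where "p = P *\<^sub>v y"
  define qt where "qt = Qt *\<^sub>v y"
  have car: "a \<in> carrier_vec n" "b \<in> carrier_vec n" "cc \<in> carrier_vec n" "d \<in> carrier_vec n"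
     "e \<in> carrier_vec n" "r \<in> carrier_vec n" "p \<in> carrier_vec n" "qt \<in> carrier_vec n"
    using c xy by (auto simp: a_def b_def cc_def d_def e_def r_def p_def qt_def)
  define u where "u = Pi *\<^sub>v x + (- (Pi * Q)) *\<^sub>v y"
  define w where "w = (- (Qt * Pi)) *\<^sub>v x + (Qt * Pi * Q - R) *\<^sub>v y"
  have u: "u = a - cc"
    unfolding u_def a_def cc_def b_def using c xy
    by (auto simp: uminus_mult_mat_vec assoc_mult_mat_vec[of _ n n _ n])
  have w: "w = - d + e - r"
    unfolding w_def d_def e_def cc_def b_def a_def r_def using c xy
    apply (subst minus_mult_distrib_mat_vec[of _ n n])
    apply (auto simp: uminus_mult_mat_vec assoc_mult_mat_vec[of _ n n _ n])
    done
  have uc: "u \<in> carrier_vec n" "w \<in> carrier_vec n" using u w car by auto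
  have "(four_block_mat (0\<^sub>m n n) (- 1\<^sub>m n) (1\<^sub>m n) (0\<^sub>m n n) *
       four_block_mat Pi (- (Pi * Q)) (- (Qt * Pi)) (Qt * Pi * Q - R)) *\<^sub>v (x @\<^sub>v y)
     = four_block_mat (0\<^sub>m n n) (- 1\<^sub>m n) (1\<^sub>m n) (0\<^sub>m n n) *\<^sub>v (u @\<^sub>v w)"
  proof -
    have B: "four_block_mat Pi (- (Pi * Q)) (- (Qt * Pi)) (Qt * Pi * Q - R) *\<^sub>v (x @\<^sub>v y) = u @\<^sub>v w"
      unfolding u_def w_def by (rule four_block_mat_mult_vec) (use c xy in auto)
    show ?thesis
      by (subst assoc_mult_mat_vec[of _ "n+n" "n+n" _ "n+n"]) (use c xy B in auto)
  qed
  also have "\<dots> = (- w) @\<^sub>v u"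
    using uc by (subst four_block_mat_mult_vec[of _ n n], auto)
  finally have M: "(four_block_mat (0\<^sub>m n n) (- 1\<^sub>m n) (1\<^sub>m n) (0\<^sub>m n n) *
       four_block_mat Pi (- (Pi * Q)) (- (Qt * Pi)) (Qt * Pi * Q - R)) *\<^sub>v (x @\<^sub>v y) = (- w) @\<^sub>v u" .
  have Pa: "P *\<^sub>v a = x" unfolding a_def
    by (subst assoc_mult_mat_vec[symmetric, of P n n Pi n]) (use c xy inv in auto)
  have Pc: "P *\<^sub>v cc = b" unfolding cc_def
    by (subst assoc_mult_mat_vec[symmetric, of P n n Pi n]) (use c car inv in auto)
  have Pip: "Pi *\<^sub>v p = y" unfolding p_def
    by (subst assoc_mult_mat_vec[symmetric, of Pi n n P n]) (use c xy inv in auto)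
  have F3: "a = k \<cdot>\<^sub>v y + cc" if "x = k \<cdot>\<^sub>v p + b"
  proof -
    have "a = Pi *\<^sub>v (k \<cdot>\<^sub>v p + b)" using that a_def by simp
    also have "\<dots> = k \<cdot>\<^sub>v (Pi *\<^sub>v p) + Pi *\<^sub>v b"
      using c car by (simp add: mult_add_distrib_mat_vec[of _ n n] mult_mat_vec[of _ n n])
    finally show ?thesis using Pip cc_def by simp
  qed
  have F4: "d = k \<cdot>\<^sub>v qt + e" if "a = k \<cdot>\<^sub>v y + cc"
  proof -
    have "d = Qt *\<^sub>v (k \<cdot>\<^sub>v y + cc)" using that d_def by simp
    also have "\<dots> = k \<cdot>\<^sub>v (Qt *\<^sub>v y) + Qt *\<^sub>v cc"
      using c car xy by (simp add: mult_add_distrib_mat_vec[of _ n n] mult_mat_vec[of _ n n])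
    finally show ?thesis using qt_def e_def by simp
  qed
  have F5: "x - b = k \<cdot>\<^sub>v p" if "u = k \<cdot>\<^sub>v y"
  proof -
    have "P *\<^sub>v u = P *\<^sub>v (k \<cdot>\<^sub>v y)" using that by simp
    moreover have "P *\<^sub>v u = x - b" unfolding u
      using c car by (simp add: mult_minus_distrib_mat_vec[of _ n n] Pa Pc)
    moreover have "P *\<^sub>v (k \<cdot>\<^sub>v y) = k \<cdot>\<^sub>v p" using c xy p_def by (simp add: mult_mat_vec[of _ n n])
    ultimately show ?thesis by simp
  qed
  have E: "\<And>v v'. v \<in> carrier_vec n \<Longrightarrow> v' \<in> carrier_vec n \<Longrightarrow> v = v' \<longleftrightarrow> (\<forall>i<n. v $ i = v' $ i)"
    by (metis carrier_vecD eq_vecI)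
  show ?thesis unfolding M smult_append_vec
  proof (subst append_vec_eq[of _ n], (use uc xy in auto)[2], intro iffI conjI)
    assume A: "- w = k \<cdot>\<^sub>v x \<and> u = k \<cdot>\<^sub>v y"
    have x: "x = k \<cdot>\<^sub>v p + b" using F5[OF conjunct2[OF A]] E[of "x - b"] E[of x] car xy by (auto simp: diff_eq_eq)
    show "x = k \<cdot>\<^sub>v (P *\<^sub>v y) + Q *\<^sub>v y" using x p_def b_def by simp
    have d: "d = k \<cdot>\<^sub>v qt + e" using F4[OF F3[OF x]] .
    have "\<forall>i<n. - (- d $ i + e $ i - r $ i) = k * x $ i"
    proof (intro allI impI)
      fix i assume i: "i < n"
      have "(-w) $ i = (k \<cdot>\<^sub>v x) $ i" using conjunct1[OF A] by simp
      then show "- (- d $ i + e $ i - r $ i) = k * x $ i" using i w car xy by simp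
    qed
    then show "k\<^sup>2 \<cdot>\<^sub>v (P *\<^sub>v y) + k \<cdot>\<^sub>v (Q *\<^sub>v y) - k \<cdot>\<^sub>v (Qt *\<^sub>v y) - R *\<^sub>v y = 0\<^sub>v n"
      unfolding p_def[symmetric] b_def[symmetric] qt_def[symmetric] r_def[symmetric]
      using E car x d by (auto simp: power2_eq_square algebra_simps)
  next
    assume A: "x = k \<cdot>\<^sub>v (P *\<^sub>v y) + Q *\<^sub>v y \<and>
        k\<^sup>2 \<cdot>\<^sub>v (P *\<^sub>v y) + k \<cdot>\<^sub>v (Q *\<^sub>v y) - k \<cdot>\<^sub>v (Qt *\<^sub>v y) - R *\<^sub>v y = 0\<^sub>v n"
    have x: "x = k \<cdot>\<^sub>v p + b" using A p_def b_def by simp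
    have a: "a = k \<cdot>\<^sub>v y + cc" using F3[OF x] .
    have d: "d = k \<cdot>\<^sub>v qt + e" using F4[OF a] .
    have Z: "\<forall>i<n. k * k * p $ i + k * b $ i - k * qt $ i - r $ i = 0"
    proof (intro allI impI)
      fix i assume i: "i < n"
      have "(k\<^sup>2 \<cdot>\<^sub>v p + k \<cdot>\<^sub>v b - k \<cdot>\<^sub>v qt - r) $ i = (0\<^sub>v n :: complex vec) $ i"
        using conjunct2[OF A] unfolding p_def[symmetric] b_def[symmetric] qt_def[symmetric] r_def[symmetric]
        by simp
      then show "k * k * p $ i + k * b $ i - k * qt $ i - r $ i = 0" using i car by (simp add: power2_eq_square)
    qed
    show "- w = k \<cdot>\<^sub>v x" using E[of "-w" "k \<cdot>\<^sub>v x"] w car xy x d Z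
      by (auto simp: algebra_simps)
    show "u = k \<cdot>\<^sub>v y" using E[of u] u a car xy by auto
  qed
qed

lemma conv:
  fixes P Q R Qt :: "complex mat"
  assumes c: "P \<in> carrier_mat n n" "Q \<in> carrier_mat n n" "R \<in> carrier_mat n n"
    "Qt \<in> carrier_mat n n" and y: "y \<in> carrier_vec n"
  shows "(k^2 \<cdot>\<^sub>m P + k \<cdot>\<^sub>m (Q - Qt) - R) *\<^sub>v y
     = k^2 \<cdot>\<^sub>v (P *\<^sub>v y) + k \<cdot>\<^sub>v (Q *\<^sub>v y) - k \<cdot>\<^sub>v (Qt *\<^sub>v y) - R *\<^sub>v y"
  apply (rule eq_vecI)
  using c y apply (auto simp: scalar_prod_def sum_distrib_left sum.distrib sum_subtractf algebra_simps)
  done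

lemma hneg: "map_mat complex_of_real (- A) = - map_mat complex_of_real A"
  by (rule eq_matI) auto
lemma hminus: "A \<in> carrier_mat n m \<Longrightarrow> B \<in> carrier_mat n m \<Longrightarrow>
  map_mat complex_of_real (A - B) = map_mat complex_of_real A - map_mat complex_of_real B"
  by (rule eq_matI) auto

lemma vec_eq_zero_iff: "(v::complex vec) \<in> carrier_vec n \<Longrightarrow> v = 0\<^sub>v n \<longleftrightarrow> (\<forall>i<n. v $ i = 0)"
  by (metis carrier_vecD eq_vecI index_zero_vec(1) index_zero_vec(2))

theorem lemma2p1:
  fixes P Q R Pinv :: "real mat" and n :: nat
  assumes "P \<in> carrier_mat n n" "Q \<in> carrier_mat n n" "R \<in> carrier_mat n n"
    and "Pinv \<in> carrier_mat n n"
    and "transpose_mat P = P" and "transpose_mat R = R"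
    and "P * Pinv = 1\<^sub>m n" and "Pinv * P = 1\<^sub>m n"
  shows "hyperbolic
      (four_block_mat (0\<^sub>m n n) (- 1\<^sub>m n) (1\<^sub>m n) (0\<^sub>m n n) *
       four_block_mat Pinv (- (Pinv * Q)) (- (transpose_mat Q * Pinv))
                      (transpose_mat Q * Pinv * Q - R))
    \<longleftrightarrow> (\<forall>a::real. det (map_mat complex_of_real ((a^2) \<cdot>\<^sub>m P + R)
                      + (\<i> * complex_of_real a) \<cdot>\<^sub>m map_mat complex_of_real (transpose_mat Q - Q)) \<noteq> 0)"
proof -
  note c = assms(1-4)
  let ?h = "map_mat complex_of_real"
  define cP where "cP = ?h P"
  define cQ where "cQ = ?h Q"
  define cR where "cR = ?h R"
  define cPi where "cPi = ?h Pinv"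
  define cQt where "cQt = ?h (transpose_mat Q)"
  have cc: "cP \<in> carrier_mat n n" "cQ \<in> carrier_mat n n" "cR \<in> carrier_mat n n"
    "cPi \<in> carrier_mat n n" "cQt \<in> carrier_mat n n"
    using c by (auto simp: cP_def cQ_def cR_def cPi_def cQt_def)
  have inv: "cP * cPi = 1\<^sub>m n" "cPi * cP = 1\<^sub>m n"
    using c assms(7,8) unfolding cP_def cPi_def
    by (metis of_real_hom.mat_hom_mult of_real_hom.mat_hom_one)+
  let ?J = "four_block_mat (0\<^sub>m n n) (- 1\<^sub>m n) (1\<^sub>m n) (0\<^sub>m n n) :: real mat"
  let ?B = "four_block_mat Pinv (- (Pinv * Q)) (- (transpose_mat Q * Pinv)) (transpose_mat Q * Pinv * Q - R)"
  let ?cJ = "four_block_mat (0\<^sub>m n n) (- 1\<^sub>m n) (1\<^sub>m n) (0\<^sub>m n n) :: complex mat"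
  let ?cB = "four_block_mat cPi (- (cPi * cQ)) (- (cQt * cPi)) (cQt * cPi * cQ - cR)"
  have hJ: "?h ?J = ?cJ" by (rule eq_matI) auto
  have hB: "?h ?B = ?cB"
    using c unfolding cP_def cQ_def cR_def cPi_def cQt_def
    by (subst map_four_block_mat[of _ n n _ n]) 
       (auto simp: hneg hminus[of _ n n] of_real_hom.mat_hom_mult[of _ n n _ n])
  have hM: "?h (?J * ?B) = ?cJ * ?cB"
    using c hJ hB by (subst of_real_hom.mat_hom_mult[of _ "n+n" "n+n" _ "n+n"]) auto
  define D where "D = (\<lambda>a::real. map_mat complex_of_real ((a^2) \<cdot>\<^sub>m P + R)
                      + (\<i> * complex_of_real a) \<cdot>\<^sub>m map_mat complex_of_real (transpose_mat Q - Q))"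
  define Z where "Z = (\<lambda>k::complex. k^2 \<cdot>\<^sub>m cP + k \<cdot>\<^sub>m (cQ - cQt) - cR)"
  have Dc: "D a \<in> carrier_mat n n" for a using c by (auto simp: D_def)
  have DZ: "D a = - Z (\<i> * complex_of_real a)" for a
    unfolding D_def Z_def cP_def cQ_def cR_def cQt_def
    by (rule eq_matI) (use c in \<open>auto simp: power2_eq_square algebra_simps\<close>)
  have DZv: "D a *\<^sub>v y = 0\<^sub>v n \<longleftrightarrow> Z (\<i> * complex_of_real a) *\<^sub>v y = 0\<^sub>v n" if y: "y \<in> carrier_vec n" for a y
  proof -
    have "Z (\<i> * complex_of_real a) \<in> carrier_mat n n" using cc by (auto simp: Z_def)
    then show ?thesis unfolding DZ using y
      by (subst (1 2) vec_eq_zero_iff[of _ n]) auto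
  qed
  have "(\<not> hyperbolic (?J * ?B)) \<longleftrightarrow> (\<exists>a. det (D a) = 0)"
  proof
    assume "\<not> hyperbolic (?J * ?B)"
    then obtain k v where v: "v \<in> carrier_vec (n+n)" "v \<noteq> 0\<^sub>v (n+n)"
      and ev: "(?cJ * ?cB) *\<^sub>v v = k \<cdot>\<^sub>v v" and re: "Re k = 0"
      unfolding hyperbolic_def eigenvalue_def eigenvector_def hM by auto
    define x where "x = vec_first v n"
    define y where "y = vec_last v n"
    have xy: "x \<in> carrier_vec n" "y \<in> carrier_vec n" "v = x @\<^sub>v y"
      using v(1) by (auto simp: x_def y_def)
    have K: "x = k \<cdot>\<^sub>v (cP *\<^sub>v y) + cQ *\<^sub>v y \<and>
        k^2 \<cdot>\<^sub>v (cP *\<^sub>v y) + k \<cdot>\<^sub>v (cQ *\<^sub>v y) - k \<cdot>\<^sub>v (cQt *\<^sub>v y) - cR *\<^sub>v y = 0\<^sub>v n"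
      using key[OF cc inv xy(1,2), of k] ev xy(3) by simp
    have y0: "y \<noteq> 0\<^sub>v n"
    proof
      assume y0: "y = 0\<^sub>v n"
      then have "x = 0\<^sub>v n" using K cc by auto
      then have "v = 0\<^sub>v (n+n)" using xy y0 by (auto intro!: eq_vecI)
      then show False using v by simp
    qed
    have kk: "k = \<i> * complex_of_real (Im k)" using re by (simp add: complex_eq_iff)
    have "Z k *\<^sub>v y = 0\<^sub>v n" unfolding Z_def using conv[OF cc(1,2,3,5) xy(2)] K by simp
    then have "D (Im k) *\<^sub>v y = 0\<^sub>v n" using DZv[OF xy(2)] kk by metis
    then have "det (D (Im k)) = 0" using det_0_iff_vec_prod_zero[OF Dc] xy y0 by blast
    then show "\<exists>a. det (D a) = 0" by blast
  next
    assume "\<exists>a. det (D a) = 0"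
    then obtain a where "det (D a) = 0" by blast
    then obtain y where y: "y \<in> carrier_vec n" "y \<noteq> 0\<^sub>v n" "D a *\<^sub>v y = 0\<^sub>v n"
      using det_0_iff_vec_prod_zero[OF Dc] by blast
    define k where "k = \<i> * complex_of_real a"
    have Zy: "Z k *\<^sub>v y = 0\<^sub>v n" using DZv[OF y(1)] y(3) k_def by simp
    define x where "x = k \<cdot>\<^sub>v (cP *\<^sub>v y) + cQ *\<^sub>v y"
    have x: "x \<in> carrier_vec n" using cc y by (auto simp: x_def)
    have ev: "(?cJ * ?cB) *\<^sub>v (x @\<^sub>v y) = k \<cdot>\<^sub>v (x @\<^sub>v y)"
      using key[OF cc inv x y(1), of k] Zy conv[OF cc(1,2,3,5) y(1)] x_def by (simp add: Z_def)
    have v0: "x @\<^sub>v y \<noteq> 0\<^sub>v (n+n)"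
    proof
      assume A: "x @\<^sub>v y = 0\<^sub>v (n+n)"
      have "\<forall>i<n. y $ i = 0"
      proof (intro allI impI)
        fix i assume i: "i < n"
        have "(x @\<^sub>v y) $ (n+i) = (0\<^sub>v (n+n) :: complex vec) $ (n+i)" using A by simp
        then show "y $ i = 0" using i x y(1) by simp
      qed
      then have "y = 0\<^sub>v n" using y(1) vec_eq_zero_iff by blast
      then show False using y by simp
    qed
    have "x @\<^sub>v y \<in> carrier_vec (n+n)" using x y by auto
    then have "eigenvalue (?h (?J * ?B)) k"
      unfolding eigenvalue_def eigenvector_def hM using ev v0 by auto
    moreover have "Re k = 0" by (simp add: k_def)
    ultimately show "\<not> hyperbolic (?J * ?B)" unfolding hyperbolic_def by blast
  qed
  then show ?thesis unfolding D_def by blast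
qed
end
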